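(* Let $L$ be a C-lattice domain in which every element is a join of principal elements. If $L$ is sharp, then $L$ is a Prüfer lattice, i.e. every compact element of $L$ is principal.
   Context: A multiplicative lattice is a complete lattice $(L,\le)$ with bottom $0$ and top $1$ which is also a commutative monoid with identity $1$ such that $a(\bigvee_\alpha b_\alpha)=\bigvee_\alpha(ab_\alpha)$ for all $a,b_\alpha\in L$. For $x,y\in L$, $(y:x)=\bigvee\{a\in L: ax\le y\}$. An element $c$ is compact if $c\le\bigvee S$ implies $c\le\bigvee T$ for some finite $T\subseteq S$. A C-lattice is a multiplicative lattice in which $1$ is compact, the product of two compact elements is compact, and every element is a join of compact elements. A proper element $p\ne1$ is prime if $xy\le p$ implies $x\le p$ or $y\le p$; $L$ is a domain if $0$ is prime. An element $x$ is principal if $y\wedge zx=((y:x)\wedge z)x$ and $y\vee(z:x)=((yx\vee z):x)$ for all $y,z\in L$. $L$ is sharp if whenever $a_1a_2\le b$ with $a_1,a_2,b\in L$, there exist $b_1,b_2\in L$ with $a_i\le b_i$ ($i=1,2$) and $b=b_1b_2$. *)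

theory Defs
  imports Main
begin

class mult_lattice = complete_lattice + comm_monoid_mult +
  assumes one_eq_top: "(1::'a) = top"
  and mult_Sup_distrib: "a * Sup B = Sup ((\<lambda>b. a * b) ` B)"

context mult_lattice
begin

definition res :: "'a \<Rightarrow> 'a \<Rightarrow> 'a" where
  "res y x = Sup {a. a * x \<le> y}"   (* (y : x) *)

definition compact :: "'a \<Rightarrow> bool" where
  "compact c \<longleftrightarrow> (\<forall>S. c \<le> Sup S \<longrightarrow> (\<exists>T. finite T \<and> T \<subseteq> S \<and> c \<le> Sup T))"

definition prime_el :: "'a \<Rightarrow> bool" where
  "prime_el p \<longleftrightarrow> p \<noteq> 1 \<and> (\<forall>x y. x * y \<le> p \<longrightarrow> x \<le> p \<or> y \<le> p)"

definition principal :: "'a \<Rightarrow> bool" where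
  "principal x \<longleftrightarrow> (\<forall>y z. inf y (z * x) = (inf (res y x) z) * x
                          \<and> sup y (res z x) = res (sup (y * x) z) x)"

end

definition C_lattice :: "'a::mult_lattice itself \<Rightarrow> bool" where
  "C_lattice _ \<longleftrightarrow> compact (1::'a)
     \<and> (\<forall>a b::'a. compact a \<and> compact b \<longrightarrow> compact (a * b))
     \<and> (\<forall>x::'a. \<exists>S. (\<forall>s\<in>S. compact s) \<and> x = Sup S)"

definition lattice_domain :: "'a::mult_lattice itself \<Rightarrow> bool" where
  "lattice_domain _ \<longleftrightarrow> prime_el (bot::'a)"

definition principally_generated :: "'a::mult_lattice itself \<Rightarrow> bool" where
  "principally_generated _ \<longleftrightarrow> (\<forall>x::'a. \<exists>S. (\<forall>s\<in>S. principal s) \<and> x = Sup S)"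

definition sharp :: "'a::mult_lattice itself \<Rightarrow> bool" where
  "sharp _ \<longleftrightarrow> (\<forall>a1 a2 b::'a. a1 * a2 \<le> b \<longrightarrow>
      (\<exists>b1 b2. a1 \<le> b1 \<and> a2 \<le> b2 \<and> b = b1 * b2))"

definition Prufer_lattice :: "'a::mult_lattice itself \<Rightarrow> bool" where
  "Prufer_lattice _ \<longleftrightarrow> (\<forall>c::'a. compact c \<longrightarrow> principal c)"

end

theory Submission
  imports Defs
begin

context mult_lattice
begin

lemma sup_mult: "a * sup b c = sup (a*b) (a*c)"
  using mult_Sup_distrib[of a "{b,c}"] by simp

lemma mult_sup_r: "sup b c * a = sup (b*a) (c*a)"
  using sup_mult by (simp add: mult.commute)

lemma mult_mono_l: "a \<le> b \<Longrightarrow> a*c \<le> b*c"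
proof -
  assume "a \<le> b"
  then have "b = sup a b" by (simp add: sup_absorb2)
  then have "b*c = sup (a*c) (b*c)" by (metis mult_sup_r)
  then show ?thesis by (metis sup_ge1)
qed

lemma mult_mono2: "a \<le> b \<Longrightarrow> c \<le> d \<Longrightarrow> a*c \<le> b*d"
  by (metis mult_mono_l mult.commute order_trans)

lemma top_mult[simp]: "top*a = a" "a*top = a"
  by (metis mult_1 one_eq_top, metis mult_1_right one_eq_top)

lemma mult_le_left: "a*b \<le> a"
  using mult_mono2[of a a b top] by simp

lemma mult_bot: "a * bot = bot"
  using mult_Sup_distrib[of a "{}"] by simp

lemma res_mult_le: "res y x * x \<le> y"
proof -
  have "res y x * x = x * Sup {a. a * x \<le> y}" by (simp add: res_def mult.commute)
  also have "\<dots> = Sup ((\<lambda>b. x*b) ` {a. a * x \<le> y})" by (rule mult_Sup_distrib)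
  also have "\<dots> \<le> y" by (auto intro!: SUP_least simp: mult.commute)
  finally show ?thesis .
qed

lemma le_res_iff: "a \<le> res y x \<longleftrightarrow> a*x \<le> y"
proof
  assume "a \<le> res y x"
  then have "a*x \<le> res y x * x" by (rule mult_mono_l)
  then show "a*x \<le> y" using res_mult_le order_trans by blast
next
  assume "a*x \<le> y" then show "a \<le> res y x" unfolding res_def by (auto intro: Sup_upper)
qed

lemma res_mono: "y \<le> y' \<Longrightarrow> res y x \<le> res y' x"
  by (meson le_res_iff order_trans res_mult_le)

lemma principal_meet: "principal x \<Longrightarrow> inf y (z*x) = inf (res y x) z * x"
  unfolding principal_def by blast

lemma principal_join: "principal x \<Longrightarrow> sup y (res z x) = res (sup (y*x) z) x"
  unfolding principal_def by blast

lemma principal_le: "principal x \<Longrightarrow> y \<le> x \<Longrightarrow> y = res y x * x"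
  using principal_meet[of x y top] by (simp add: inf_absorb1)

lemma principal_bot: "principal bot"
proof -
  have r: "res z bot = top" for z unfolding res_def by (simp add: mult_bot)
  show ?thesis unfolding principal_def by (simp add: mult_bot r)
qed

lemma res_bot: "prime_el bot \<Longrightarrow> x \<noteq> bot \<Longrightarrow> res bot x = bot"
  unfolding res_def prime_el_def using bot_unique by (auto intro!: Sup_eqI) 

lemma cancel: assumes "prime_el bot" "principal x" "x \<noteq> bot" "u*x \<le> v*x" shows "u \<le> v"
proof -
  have "u \<le> res (v*x) x" using assms(4) le_res_iff by blast
  also have "\<dots> = res (sup (v*x) bot) x" by simp
  also have "\<dots> = sup v (res bot x)" using principal_join[OF assms(2)] by metis
  also have "\<dots> = v" using res_bot[OF assms(1,3)] by simp
  finally show ?thesis .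
qed

lemma factor_principal:
  assumes D: "prime_el bot" and px: "principal x" and nx: "x \<noteq> bot" and cd: "c*d = x"
  shows "principal c"
proof -
  have key: "res (y*d) x \<le> res y c" for y
  proof -
    let ?w = "res (y*d) x"
    have "?w * x \<le> y*d" by (rule res_mult_le)
    then have "?w * x * c \<le> y * d * c" by (rule mult_mono_l)
    moreover have "?w * x * c = ?w * c * x" by (simp add: ac_simps)
    moreover have "y * d * c = y * x" using cd by (metis mult.assoc mult.commute)
    ultimately have "?w * c * x \<le> y * x" by simp
    then have "?w * c \<le> y" using cancel[OF D px nx] by blast
    then show ?thesis using le_res_iff by blast
  qed
  have meet: "inf y (z*c) = inf (res y c) z * c" for y z
  proof (rule order.antisym)
    let ?m = "inf y (z*c)"
    have zx: "z*c*d = z*x" using cd by (metis mult.assoc)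
    have "?m * d \<le> inf (y*d) (z*x)"
      using mult_mono_l[of ?m y d] mult_mono_l[of ?m "z*c" d] unfolding zx by simp
    also have "\<dots> = inf (res (y*d) x) z * x" by (rule principal_meet[OF px])
    finally have "?m * d * c \<le> inf (res (y*d) x) z * x * c" by (rule mult_mono_l)
    moreover have "?m * d * c = ?m * x" using cd by (metis mult.assoc mult.commute)
    moreover have "inf (res (y*d) x) z * x * c = (inf (res (y*d) x) z * c) * x"
      by (metis mult.assoc mult.commute)
    ultimately have "?m * x \<le> (inf (res (y*d) x) z * c) * x" by simp
    then have "?m \<le> inf (res (y*d) x) z * c" using cancel[OF D px nx] by blast
    also have "\<dots> \<le> inf (res y c) z * c"
      using key by (intro mult_mono_l) (meson inf_mono order_refl)
    finally show "?m \<le> inf (res y c) z * c" .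
  next
    have "inf (res y c) z * c \<le> res y c * c" by (intro mult_mono_l) simp
    then have "inf (res y c) z * c \<le> y" using res_mult_le order_trans by blast
    moreover have "inf (res y c) z * c \<le> z * c" by (intro mult_mono_l) simp
    ultimately show "inf (res y c) z * c \<le> inf y (z*c)" by simp
  qed
  have join: "sup y (res z c) = res (sup (y*c) z) c" for y z
  proof (rule order.antisym)
    have "y \<le> res (sup (y*c) z) c" using le_res_iff by simp
    moreover have "res z c \<le> res (sup (y*c) z) c" by (intro res_mono) simp
    ultimately show "sup y (res z c) \<le> res (sup (y*c) z) c" by simp
  next
    let ?w = "res (sup (y*c) z) c"
    have "?w * c \<le> sup (y*c) z" by (rule res_mult_le)
    then have "?w * c * d \<le> sup (y*c) z * d" by (rule mult_mono_l)
    moreover have "?w * c * d = ?w * x" using cd by (metis mult.assoc)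
    moreover have "sup (y*c) z * d = sup (y*x) (z*d)" using cd by (metis mult_sup_r mult.assoc)
    ultimately have "?w * x \<le> sup (y*x) (z*d)" by simp
    then have "?w \<le> res (sup (y*x) (z*d)) x" using le_res_iff by blast
    also have "\<dots> = sup y (res (z*d) x)" using principal_join[OF px] by metis
    also have "\<dots> \<le> sup y (res z c)" using key by (meson sup_mono order_refl)
    finally show "?w \<le> sup y (res z c)" .
  qed
  show ?thesis unfolding principal_def using meet join by blast
qed

lemma join_principal:
  assumes D: "prime_el bot"
    and sh: "\<forall>a1 a2 b. a1*a2 \<le> b \<longrightarrow> (\<exists>b1 b2. a1 \<le> b1 \<and> a2 \<le> b2 \<and> b = b1*b2)"
    and px: "principal x" and py: "principal y"
  shows "principal (sup x y)"
proof (cases "x = bot \<or> y = bot")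
  case True then show ?thesis using px py by auto
next
  case False
  then have nx: "x \<noteq> bot" and ny: "y \<noteq> bot" by auto
  define c where "c = sup x y"
  have "c * res x c \<le> x" using res_mult_le[of x c] by (simp add: mult.commute)
  then obtain b1 b2 where cb1: "c \<le> b1" and rb2: "res x c \<le> b2" and xb: "x = b1*b2"
    using sh by blast
  have pb1: "principal b1" using factor_principal[OF D px nx] xb by simp
  have nb1: "b1 \<noteq> bot" using xb nx by (metis mult.commute mult_bot)
  define p where "p = res x b1"
  define q where "q = res y b1"
  have xle: "x \<le> b1" and yle: "y \<le> b1" using cb1 unfolding c_def by auto
  have xp: "x = p*b1" unfolding p_def using principal_le[OF pb1 xle] .
  have yq: "y = q*b1" unfolding q_def using principal_le[OF pb1 yle] .
  have pp: "principal p" using factor_principal[OF D px nx] xp by simp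
  have pq: "principal q" using factor_principal[OF D py ny] yq by simp
  have np: "p \<noteq> bot" using xp nx by (metis mult.commute mult_bot)
  have nq: "q \<noteq> bot" using yq ny by (metis mult.commute mult_bot)
  have pq1: "res p q \<le> p"
  proof -
    let ?w = "res p q"
    have "?w * q \<le> p" by (rule res_mult_le)
    then have "?w * q * b1 \<le> p * b1" by (rule mult_mono_l)
    then have wy: "?w * y \<le> x" using xp yq by (simp add: mult.assoc)
    have wx: "?w * x \<le> x" using mult_le_left[of x ?w] by (simp add: mult.commute)
    have "?w * c = sup (?w*x) (?w*y)" unfolding c_def by (rule sup_mult)
    then have "?w * c \<le> x" using wx wy by simp
    then have "?w \<le> b2" using rb2 le_res_iff order_trans by blast
    then have "?w * b1 \<le> b2 * b1" by (rule mult_mono_l)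
    then have "?w * b1 \<le> p * b1" using xb xp by (simp add: mult.commute)
    then show ?thesis using cancel[OF D pb1 nb1] by blast
  qed
  have qp1: "res q p \<le> q"
  proof -
    have "inf p q = res p q * q" using principal_meet[OF pq, of p top] by simp
    also have "\<dots> \<le> p * q" by (intro mult_mono_l pq1)
    finally have a: "inf p q \<le> p*q" .
    have "inf q p = res q p * p" using principal_meet[OF pp, of q top] by simp
    then have "res q p * p \<le> q * p" using a by (simp add: inf_commute mult.commute)
    then show ?thesis using cancel[OF D pp np] by blast
  qed
  have "q*q \<le> sup p (q*q)" by simp
  then obtain e1 e2 where qe1: "q \<le> e1" and qe2: "q \<le> e2" and be: "sup p (q*q) = e1*e2"
    using sh by blast
  have resb: "res (sup p (q*q)) q \<le> sup p q"
  proof -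
    have "res (sup (q*q) p) q = sup q (res p q)" using principal_join[OF pq] by metis
    then show ?thesis using pq1 by (simp add: sup_commute le_supI1 le_supI2)
  qed
  have "e1 * q \<le> e1 * e2" using mult_mono2[OF order_refl qe2] .
  then have "e1 \<le> sup p q" using be resb le_res_iff order_trans by metis
  moreover have "e2 * q \<le> e1 * e2" using mult_mono2[OF order_refl qe1, of e2] by (simp add: mult.commute)
  then have "e2 \<le> sup p q" using be resb le_res_iff order_trans by metis
  ultimately have "sup p (q*q) \<le> sup p q * sup p q" using be mult_mono2 by metis
  also have "\<dots> = sup (sup p q * p) (sup (p*q) (q*q))"
    by (simp add: sup_mult mult_sup_r mult.commute)
  also have "\<dots> \<le> sup (sup p q * p) (q*q)"
  proof -
    have "p*q \<le> sup p q * p" using mult_mono_l[of q "sup p q" p] by (simp add: mult.commute)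
    then show ?thesis by (simp add: le_supI1 le_supI2)
  qed
  finally have "p \<le> sup (sup p q * p) (q*q)" by simp
  then have "top * p \<le> sup (sup p q * p) (q*q)" by simp
  then have "top \<le> res (sup (sup p q * p) (q*q)) p" using le_res_iff by blast
  also have "\<dots> = sup (sup p q) (res (q*q) p)" using principal_join[OF pp] by metis
  also have "\<dots> \<le> sup p q"
  proof -
    have "res (q*q) p \<le> res q p" by (intro res_mono mult_le_left)
    then show ?thesis using qp1 by (simp add: le_supI2)
  qed
  finally have "sup p q = top" using top_unique by blast
  then have "c = b1" unfolding c_def using xp yq by (simp add: mult_sup_r[symmetric])
  then show ?thesis using pb1 unfolding c_def by simp
qed

lemma finite_Sup_principal:
  assumes D: "prime_el bot"
    and sh: "\<forall>a1 a2 b. a1*a2 \<le> b \<longrightarrow> (\<exists>b1 b2. a1 \<le> b1 \<and> a2 \<le> b2 \<and> b = b1*b2)"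
  shows "finite T \<Longrightarrow> (\<forall>s\<in>T. principal s) \<Longrightarrow> principal (Sup T)"
proof (induction T rule: finite_induct)
  case empty then show ?case using principal_bot by simp
next
  case (insert s T) then show ?case using join_principal[OF D sh] by simp
qed

end

theorem proposition3p5:
  assumes "C_lattice TYPE('a::mult_lattice)"
    and "lattice_domain TYPE('a)"
    and "principally_generated TYPE('a)"
    and "sharp TYPE('a)"
  shows "Prufer_lattice TYPE('a)"
  unfolding Prufer_lattice_def
proof (intro allI impI)
  fix c :: 'a
  assume cc: "compact c"
  have D: "prime_el (bot::'a)" using assms(2) unfolding lattice_domain_def .
  have sh: "\<forall>a1 a2 b::'a. a1*a2 \<le> b \<longrightarrow> (\<exists>b1 b2. a1 \<le> b1 \<and> a2 \<le> b2 \<and> b = b1*b2)"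
    using assms(4) unfolding sharp_def .
  obtain S where S: "\<forall>s\<in>S. principal s" "c = Sup S"
    using assms(3) unfolding principally_generated_def by blast
  then obtain T where T: "finite T" "T \<subseteq> S" "c \<le> Sup T"
    using cc unfolding compact_def by blast
  have "Sup T \<le> c" using S T by (simp add: Sup_subset_mono)
  then have "c = Sup T" using T by (simp add: order.antisym)
  moreover have "principal (Sup T)" using finite_Sup_principal[OF D sh T(1)] S T by blast
  ultimately show "principal c" by simp
qed

end
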